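(* Consider the two-observation Lewis signaling game with observations $o_1,o_2$ (each occurring with probability $p(o_1)=p(o_2)=\tfrac12$), messages $m_1,m_2$, actions $a_1,a_2$, and reward $R(o_i,a_j)=1$ if $i=j$ and $R(o_i,a_j)=0$ if $i\neq j$. An instructor with parameter $S\in[0,1]$ sends message $m_j$ on observation $o_i$ with probability $\pi_S(m_j\mid o_i)=S$ if $i=j$ and $1-S$ otherwise; an executor with parameter $L\in[0,1]$ takes action $a_j$ on message $m_i$ with probability $\pi_L(a_j\mid m_i)=L$ if $i=j$ and $1-L$ otherwise. The expected reward is $$J(S,L)=\sum_{o,m,a}p(o)\,\pi_S(m\mid o)\,\pi_L(a\mid m)\,R(o,a)=\tfrac12 SL+\tfrac12(1-S)(1-L),$$ so that $\partial J/\partial S=L-\tfrac12$ and $\partial J/\partial L=S-\tfrac12$. Let $(S(t),L(t))_{t\ge 0}$ evolve by the clipped gradient flow: $\frac{dS}{dt}=L-\tfrac12$ and $\frac{dL}{dt}=S-\tfrac12$, except that the derivative of a parameter is set to $0$ whenever that parameter equals $0$ or $1$. Suppose the initial values satisfy $S(0),L(0)\in(0,1)$ and $L(0)+S(0)<1$. Then the agents undergo semantic drift: $L(t)$ converges to $0$ as $t\to\infty$.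
   Context: Messages are thought of as natural-language commands ($m_i$ means "do $a_i$"), so an executor with $L>\tfrac12$ respects the natural-language meaning. An initialization $(S(0),L(0))$ is said to undergo executor semantic drift if, after training, $L<\tfrac12$. *)

theory Defs
  imports "HOL-Analysis.Analysis"
begin

definition reward :: "nat \<Rightarrow> nat \<Rightarrow> real" where
  "reward i j = (if i = j then 1 else 0)"

definition instructor :: "real \<Rightarrow> nat \<Rightarrow> nat \<Rightarrow> real" where
  "instructor S i j = (if i = j then S else 1 - S)"

definition executor :: "real \<Rightarrow> nat \<Rightarrow> nat \<Rightarrow> real" where
  "executor L i j = (if i = j then L else 1 - L)"

definition J :: "real \<Rightarrow> real \<Rightarrow> real" where
  "J S L = (\<Sum>ob\<in>{1,2::nat}. \<Sum>m\<in>{1,2::nat}. \<Sum>a\<in>{1,2::nat}.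
              (1/2) * instructor S ob m * executor L m a * reward ob a)"

text \<open>Clipped gradient flow on t \<ge> 0: dS/dt = dJ/dS = L - 1/2, dL/dt = dJ/dL = S - 1/2,
  with the derivative of a parameter set to 0 whenever that parameter is 0 or 1.
  Since clipping makes the velocity field discontinuous, derivatives are taken as
  right derivatives (forward-time evolution), together with continuity on [0,\<infinity>).\<close>

definition clipped_flow :: "(real \<Rightarrow> real) \<Rightarrow> (real \<Rightarrow> real) \<Rightarrow> bool" where
  "clipped_flow S L \<longleftrightarrow>
     continuous_on {0..} S \<and> continuous_on {0..} L \<and>
     (\<forall>t\<ge>0. S t \<in> {0..1} \<and> L t \<in> {0..1} \<and>
        (S has_real_derivative (if S t = 0 \<or> S t = 1 then 0 else L t - 1/2)) (at t within {t..}) \<and>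
        (L has_real_derivative (if L t = 0 \<or> L t = 1 then 0 else S t - 1/2)) (at t within {t..}))"

end

theory Submission
  imports Defs
begin

lemma lemA:
  fixes \<phi> :: "real \<Rightarrow> real"
  assumes ab: "a \<le> b" and cont: "continuous_on {a..b} \<phi>" and pa: "\<phi> a \<le> 0"
    and der: "\<And>t. a \<le> t \<Longrightarrow> t < b \<Longrightarrow> \<phi> t = 0 \<Longrightarrow>
               \<exists>D<0. (\<phi> has_real_derivative D) (at t within {t..})"
  shows "\<phi> b \<le> 0"
proof -
  define G where "G = {s\<in>{a..b}. \<forall>t\<in>{a..s}. \<phi> t \<le> 0}"
  have aG: "a \<in> G" using ab pa by (auto simp: G_def)
  have bdd: "bdd_above G" by (auto simp: G_def bdd_above_def)
  define T where "T = Sup G"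
  have aT: "a \<le> T" unfolding T_def using aG bdd by (rule cSup_upper)
  have Tb: "T \<le> b" unfolding T_def using aG by (intro cSup_least) (auto simp: G_def)
  have below: "\<phi> t \<le> 0" if "a \<le> t" "t < T" for t
  proof -
    from that have "t < Sup G" by (simp add: T_def)
    then obtain s where "s \<in> G" "t < s" using aG bdd less_cSup_iff[of G t] by blast
    then show ?thesis using that by (auto simp: G_def)
  qed
  have cT: "\<phi> T \<le> 0"
  proof (rule ccontr)
    assume "\<not> \<phi> T \<le> 0"
    hence pos: "\<phi> T > 0" by simp
    hence "T \<noteq> a" using pa by auto
    hence aT': "a < T" using aT by simp
    have "T \<in> {a..b}" using aT Tb by simp
    then obtain d where d: "d > 0" "\<forall>x'\<in>{a..b}. dist x' T < d \<longrightarrow> dist (\<phi> x') (\<phi> T) < \<phi> T"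
      using cont pos unfolding continuous_on_iff by blast
    define t where "t = max a (T - d/2)"
    have t: "a \<le> t" "t < T" "t \<in> {a..b}" "dist t T < d" using aT' d(1) Tb
      by (auto simp: t_def dist_real_def)
    have "dist (\<phi> t) (\<phi> T) < \<phi> T" using d(2) t by blast
    hence "\<phi> t > 0" by (auto simp: dist_real_def)
    with below[OF t(1,2)] show False by simp
  qed
  have TG: "\<forall>t\<in>{a..T}. \<phi> t \<le> 0"
    using below cT by (metis atLeastAtMost_iff order_le_less)
  have "\<not> T < b"
  proof
    assume Tb': "T < b"
    have "\<exists>T'>T. T' \<in> G"
    proof (cases "\<phi> T = 0")
      case True
      obtain D where D: "D < 0" "(\<phi> has_real_derivative D) (at T within {T..})"
        using der[OF aT Tb' True] by blast
      have "((\<lambda>y. (\<phi> y - \<phi> T) / (y - T)) \<longlongrightarrow> D) (at T within {T..})"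
        using D(2) by (simp add: has_field_derivative_iff)
      hence "eventually (\<lambda>y. (\<phi> y - \<phi> T) / (y - T) < 0) (at T within {T..})"
        using D(1) by (simp add: order_tendstoD(2))
      then obtain d where d: "d > 0"
        "\<forall>y\<in>{T..}. y \<noteq> T \<and> dist y T < d \<longrightarrow> (\<phi> y - \<phi> T) / (y - T) < 0"
        unfolding eventually_at by blast
      define T' where "T' = min b (T + d/2)"
      have "T' \<in> G"
        unfolding G_def
      proof safe
        show "T' \<in> {a..b}" using aT Tb' d(1) by (auto simp: T'_def)
        fix t assume t: "t \<in> {a..T'}"
        show "\<phi> t \<le> 0"
        proof (cases "t \<le> T")
          case True then show ?thesis using TG t by auto
        next
          case False
          hence "t \<in> {T..}" "t \<noteq> T" "dist t T < d" using t d(1)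
            by (auto simp: T'_def dist_real_def)
          hence "(\<phi> t - \<phi> T) / (t - T) < 0" using d(2) by blast
          moreover have "t - T > 0" using False by simp
          ultimately show ?thesis using True by (simp add: divide_less_0_iff)
        qed
      qed
      moreover have "T' > T" using Tb' d(1) by (simp add: T'_def)
      ultimately show ?thesis by blast
    next
      case False
      hence neg: "\<phi> T < 0" using cT by simp
      have "T \<in> {a..b}" using aT Tb by simp
      then obtain d where d: "d > 0" "\<forall>x'\<in>{a..b}. dist x' T < d \<longrightarrow> dist (\<phi> x') (\<phi> T) < - \<phi> T"
        using cont neg unfolding continuous_on_iff by (metis neg_0_less_iff_less)
      define T' where "T' = min b (T + d/2)"
      have "T' \<in> G"
        unfolding G_def
      proof safe
        show "T' \<in> {a..b}" using aT Tb' d(1) by (auto simp: T'_def)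
        fix t assume t: "t \<in> {a..T'}"
        show "\<phi> t \<le> 0"
        proof (cases "t \<le> T")
          case True then show ?thesis using TG t by auto
        next
          case False
          hence "t \<in> {a..b}" "dist t T < d" using t d(1) aT
            by (auto simp: T'_def dist_real_def)
          hence "dist (\<phi> t) (\<phi> T) < - \<phi> T" using d(2) by blast
          then show ?thesis by (auto simp: dist_real_def)
        qed
      qed
      moreover have "T' > T" using Tb' d(1) by (simp add: T'_def)
      ultimately show ?thesis by blast
    qed
    then obtain T' where "T' > T" "T' \<in> G" by blast
    moreover have "T' \<le> T" unfolding T_def using \<open>T' \<in> G\<close> bdd by (rule cSup_upper)
    ultimately show False by simp
  qed
  hence "T = b" using Tb by simp
  thus ?thesis using cT by simp
qed

theorem proposition1:
  fixes S L :: "real \<Rightarrow> real"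
  assumes "clipped_flow S L"
    and "S 0 \<in> {0<..<1}" and "L 0 \<in> {0<..<1}"
    and "L 0 + S 0 < 1"
  shows "(L \<longlongrightarrow> 0) at_top"
proof -
  define DS where "DS t = (if S t = 0 \<or> S t = 1 then 0 else L t - 1/2)" for t
  define DL where "DL t = (if L t = 0 \<or> L t = 1 then 0 else S t - 1/2)" for t
  define w where "w t = S t + L t" for t
  define w0 where "w0 = w 0"
  define \<delta> :: real where "\<delta> = min (1 - w0) (1/2)"
  have w0: "w0 < 1" "0 < w0" using assms(2-4) by (auto simp: w0_def w_def)
  have \<delta>: "\<delta> > 0" using w0 by (simp add: \<delta>_def)
  have cS: "continuous_on {0..} S" and cL: "continuous_on {0..} L"
    and rng: "\<And>t. t \<ge> 0 \<Longrightarrow> S t \<in> {0..1} \<and> L t \<in> {0..1}"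
    and dS: "\<And>t. t \<ge> 0 \<Longrightarrow> (S has_real_derivative DS t) (at t within {t..})"
    and dL: "\<And>t. t \<ge> 0 \<Longrightarrow> (L has_real_derivative DL t) (at t within {t..})"
    using assms(1) unfolding clipped_flow_def DS_def DL_def by blast+
  have cw: "continuous_on {0..} w" unfolding w_def
    using cS cL by (intro continuous_on_add)
  have dw: "(w has_real_derivative (DS t + DL t)) (at t within {t..})" if "t \<ge> 0" for t
    unfolding w_def using dS[OF that] dL[OF that] by (rule DERIV_add)
  have dle: "DS t + DL t \<le> 0" if "t \<ge> 0" "w t < 1" for t
    using rng[OF that(1)] that(2) by (auto simp: DS_def DL_def w_def)
  have dle2: "DS t + DL t \<le> - \<delta>" if "t \<ge> 0" "w t \<le> w0" "w t > 0" for t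
    using rng[OF that(1)] that(2,3) w0 by (auto simp: DS_def DL_def w_def \<delta>_def min_def)
  have B: "w b \<le> c" if "0 \<le> a" "a \<le> b" "w a \<le> c" "c < 1" for a b c
  proof -
    have main: "w b \<le> c + \<epsilon> * (b - a)" if \<epsilon>: "\<epsilon> > 0" "\<epsilon> * (b - a) < 1 - c" for \<epsilon>
    proof -
      have "(\<lambda>t. w t - c - \<epsilon> * (t - a)) b \<le> 0"
      proof (rule lemA[where \<phi>="\<lambda>t. w t - c - \<epsilon> * (t - a)"])
        show "a \<le> b" by fact
        show "continuous_on {a..b} (\<lambda>t. w t - c - \<epsilon> * (t - a))"
          using cw \<open>0 \<le> a\<close>
          by (intro continuous_intros) (auto elim: continuous_on_subset)
        show "w a - c - \<epsilon> * (a - a) \<le> 0" using \<open>w a \<le> c\<close> by simp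
        fix t assume t: "a \<le> t" "t < b" "w t - c - \<epsilon> * (t - a) = 0"
        have t0: "t \<ge> 0" using t \<open>0 \<le> a\<close> by simp
        have "\<epsilon> * (t - a) \<le> \<epsilon> * (b - a)" using t \<epsilon> by simp
        hence "w t < 1" using t \<epsilon> by linarith
        hence "DS t + DL t - \<epsilon> < 0" using dle[OF t0] \<epsilon> by simp
        moreover have "((\<lambda>t. w t - c - \<epsilon> * (t - a)) has_real_derivative (DS t + DL t - \<epsilon>)) (at t within {t..})"
          using dw[OF t0] by (auto intro!: derivative_eq_intros)
        ultimately show "\<exists>D<0. ((\<lambda>t. w t - c - \<epsilon> * (t - a)) has_real_derivative D) (at t within {t..})"
          by blast
      qed
      thus ?thesis by simp
    qed
    show ?thesis
    proof (rule ccontr)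
      assume "\<not> w b \<le> c"
      hence wb: "w b > c" by simp
      hence "b \<noteq> a" using that by auto
      hence ba: "b - a > 0" using that by simp
      define \<epsilon> where "\<epsilon> = min (1 - c) (w b - c) / (2 * (b - a))"
      have e1: "\<epsilon> * (b - a) = min (1 - c) (w b - c) / 2" using ba by (simp add: \<epsilon>_def field_simps)
      have "\<epsilon> > 0" using ba wb that by (simp add: \<epsilon>_def)
      moreover have "\<epsilon> * (b - a) < 1 - c" using e1 that wb by simp
      ultimately have "w b \<le> c + \<epsilon> * (b - a)" using main by blast
      moreover have "\<epsilon> * (b - a) < w b - c" using e1 that wb by simp
      ultimately show False by simp
    qed
  qed
  have wle: "w t \<le> w0" if "t \<ge> 0" for t
    using B[of 0 t w0] that w0 by (simp add: w0_def)
  have mono: "w b \<le> w a" if "0 \<le> a" "a \<le> b" for a b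
    using B[of a b "w a"] that wle[of a] w0 by simp
  have ex: "\<exists>t0\<ge>0. w t0 \<le> \<eta>" if \<eta>: "\<eta> > 0" for \<eta>
  proof (rule ccontr)
    assume "\<not> ?thesis"
    hence big: "\<And>t. t \<ge> 0 \<Longrightarrow> w t > \<eta>" by force
    define T where "T = 2 * w0 / \<delta> + 1"
    have T0: "T \<ge> 0" using w0 \<delta> by (simp add: T_def)
    have "(\<lambda>t. w t - w0 + \<delta>/2 * t) T \<le> 0"
    proof (rule lemA[where \<phi>="\<lambda>t. w t - w0 + \<delta>/2 * t"])
      show "0 \<le> T" by fact
      show "continuous_on {0..T} (\<lambda>t. w t - w0 + \<delta>/2 * t)"
        using cw by (intro continuous_intros) (auto elim: continuous_on_subset)
      show "w 0 - w0 + \<delta>/2 * 0 \<le> 0" by (simp add: w0_def)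
      fix t assume t: "0 \<le> t" "t < T" "w t - w0 + \<delta>/2 * t = 0"
      have "DS t + DL t \<le> - \<delta>" using dle2[OF t(1) wle[OF t(1)]] big[OF t(1)] \<eta> by simp
      hence "DS t + DL t + \<delta>/2 < 0" using \<delta> by simp
      moreover have "((\<lambda>t. w t - w0 + \<delta>/2 * t) has_real_derivative (DS t + DL t + \<delta>/2)) (at t within {t..})"
        using dw[OF t(1)] by (auto intro!: derivative_eq_intros)
      ultimately show "\<exists>D<0. ((\<lambda>t. w t - w0 + \<delta>/2 * t) has_real_derivative D) (at t within {t..})"
        by blast
    qed
    hence "w T \<le> w0 - \<delta>/2 * T" by simp
    also have "\<delta>/2 * T = w0 + \<delta>/2" using \<delta> by (simp add: T_def field_simps)
    finally have "w T \<le> - \<delta>/2" by simp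
    with big[OF T0] \<eta> \<delta> show False by simp
  qed
  show ?thesis
    unfolding tendsto_iff eventually_at_top_linorder
  proof (intro allI impI)
    fix e :: real assume e: "e > 0"
    obtain t0 where t0: "t0 \<ge> 0" "w t0 \<le> e/2" using ex[of "e/2"] e by auto
    show "\<exists>N. \<forall>n\<ge>N. dist (L n) 0 < e"
    proof (intro exI allI impI)
      fix n assume n: "n \<ge> t0"
      have "w n \<le> w t0" using mono[OF t0(1) n] .
      moreover have "S n \<ge> 0" "L n \<ge> 0" using rng[of n] n t0 by auto
      ultimately show "dist (L n) 0 < e" using t0 e by (simp add: w_def dist_real_def)
    qed
  qed
qed

end
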